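(* Let $\lambda\in\Lambda$ (single-hop). For every $q\in\mathbb R_+^N$, $\Delta(q)$ is the unique optimal solution of the problem: minimize $L(r)$ over $r\in\mathbb R_+^N$ subject to $\xi\cdot r\ge\xi\cdot q$ for all $\xi\in\Xi^+(\lambda)$.
   Context: Single-hop network with $N$ queues and finite $\mathcal S\subset\mathbb R_+^N$; $f:\mathbb R_+\to\mathbb R_+$ differentiable, strictly increasing, $f(0)=0$; $L(q)=\sum_n\int_0^{q_n}f$. $\langle\mathcal S\rangle$ convex hull; $\Lambda=\{\lambda\in\mathbb R_+^N:\lambda\le\sigma$ for some $\sigma\in\langle\mathcal S\rangle\}$. $E$ = set of extreme points of $\{\xi\in\mathbb R_+^N:\max_{\pi\in\mathcal S}\xi\cdot\pi\le1\}$; $\mathcal S^*$ = maximal elements of $E$ (componentwise order); $\Xi(\lambda)=\{\xi\in\mathcal S^*:\xi\cdot\lambda=1\}$; $\Xi^+(\lambda)=\{\xi\in E:\xi\cdot\lambda=1\}$. Lifting map: $\Delta(q)$ is the unique minimizer of $L(r)$ over $r\in\mathbb R_+^N$ s.t. $\xi\cdot r\ge\xi\cdot q$ for all $\xi\in\Xi(\lambda)$ and $r_n\le q_n$ for all $n$ with $\lambda_n=0$. *)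

theory Defs
  imports "HOL-Analysis.Analysis"
begin

text \<open>Vectors in R^N are modelled as real^'n (N = CARD('n)). The componentwise
order is spelled out explicitly.\<close>

definition nonneg_vec :: "real^'n \<Rightarrow> bool" where
  "nonneg_vec x \<longleftrightarrow> (\<forall>i. 0 \<le> x $ i)"

definition vle :: "real^'n \<Rightarrow> real^'n \<Rightarrow> bool" where
  "vle x y \<longleftrightarrow> (\<forall>i. x $ i \<le> y $ i)"

definition Lam :: "(real^'n) set \<Rightarrow> (real^'n) set" where
  "Lam S = {lam. nonneg_vec lam \<and> (\<exists>\<sigma>\<in>convex hull S. vle lam \<sigma>)}"

definition dualpoly :: "(real^'n) set \<Rightarrow> (real^'n) set" where
  "dualpoly S = {\<xi>. nonneg_vec \<xi> \<and> (\<forall>\<pi>\<in>S. \<xi> \<bullet> \<pi> \<le> 1)}"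

definition Eset :: "(real^'n) set \<Rightarrow> (real^'n) set" where
  "Eset S = {\<xi>. \<xi> extreme_point_of dualpoly S}"

definition Sstar :: "(real^'n) set \<Rightarrow> (real^'n) set" where
  "Sstar S = {\<xi>\<in>Eset S. \<not> (\<exists>\<eta>\<in>Eset S. vle \<xi> \<eta> \<and> \<eta> \<noteq> \<xi>)}"

definition Xi :: "(real^'n) set \<Rightarrow> real^'n \<Rightarrow> (real^'n) set" where
  "Xi S lam = {\<xi>\<in>Sstar S. \<xi> \<bullet> lam = 1}"

definition Xi_plus :: "(real^'n) set \<Rightarrow> real^'n \<Rightarrow> (real^'n) set" where
  "Xi_plus S lam = {\<xi>\<in>Eset S. \<xi> \<bullet> lam = 1}"

definition Lyap :: "(real \<Rightarrow> real) \<Rightarrow> real^'n \<Rightarrow> real" where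
  "Lyap f q = (\<Sum>n\<in>UNIV. integral {0..q $ n} f)"

definition lift_feasible :: "(real^'n) set \<Rightarrow> real^'n \<Rightarrow> real^'n \<Rightarrow> real^'n \<Rightarrow> bool" where
  "lift_feasible S lam q r \<longleftrightarrow> nonneg_vec r \<and> (\<forall>\<xi>\<in>Xi S lam. \<xi> \<bullet> r \<ge> \<xi> \<bullet> q)
      \<and> (\<forall>n. lam $ n = 0 \<longrightarrow> r $ n \<le> q $ n)"

definition Delta :: "(real \<Rightarrow> real) \<Rightarrow> (real^'n) set \<Rightarrow> real^'n \<Rightarrow> real^'n \<Rightarrow> real^'n" where
  "Delta f S lam q = (THE r. lift_feasible S lam q r \<and>
      (\<forall>r'. lift_feasible S lam q r' \<longrightarrow> Lyap f r \<le> Lyap f r'))"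

definition plus_feasible :: "(real^'n) set \<Rightarrow> real^'n \<Rightarrow> real^'n \<Rightarrow> real^'n \<Rightarrow> bool" where
  "plus_feasible S lam q r \<longleftrightarrow> nonneg_vec r \<and> (\<forall>\<xi>\<in>Xi_plus S lam. \<xi> \<bullet> r \<ge> \<xi> \<bullet> q)"

definition plus_optimal :: "(real \<Rightarrow> real) \<Rightarrow> (real^'n) set \<Rightarrow> real^'n \<Rightarrow> real^'n \<Rightarrow> real^'n \<Rightarrow> bool" where
  "plus_optimal f S lam q r \<longleftrightarrow> plus_feasible S lam q r \<and>
      (\<forall>r'. plus_feasible S lam q r' \<longrightarrow> Lyap f r \<le> Lyap f r')"

end

theory Submission
  imports Defs
begin


locale fG =
  fixes f :: "real \<Rightarrow> real"
  assumes fc: "continuous_on {0..} f"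
    and fm: "strict_mono_on {0..} f"
    and f0: "f 0 = 0"
begin

lemma fint: "0 \<le> a \<Longrightarrow> f integrable_on {a..b}"
  by (rule integrable_continuous_real, rule continuous_on_subset[OF fc]) auto

lemma fnn: "0 \<le> x \<Longrightarrow> 0 \<le> f x"
  using fm f0 by (metis atLeast_iff order.refl order_le_less strict_mono_onD)

lemma fle: "0 \<le> x \<Longrightarrow> x \<le> y \<Longrightarrow> f x \<le> f y"
  using fm by (metis atLeast_iff order_le_less order_trans strict_mono_onD)

lemma flt: "0 \<le> x \<Longrightarrow> x < y \<Longrightarrow> f x < f y"
  using fm by (metis atLeast_iff less_imp_le order_trans strict_mono_onD)

lemma comb: "0 \<le> a \<Longrightarrow> a \<le> b \<Longrightarrow> integral {0..b} f - integral {0..a} f = integral {a..b} f"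
  using Henstock_Kurzweil_Integration.integral_combine[where a=0 and c=a and b=b and f=f] fint[of 0 b] by auto

lemma lowb: "a \<le> b \<Longrightarrow> 0 \<le> a \<Longrightarrow> (b - a) * f a \<le> integral {a..b} f"
proof -
  assume h: "a \<le> b" "0 \<le> a"
  have "integral {a..b} (\<lambda>x. f a) \<le> integral {a..b} f"
    by (rule integral_le) (use h fint fle in auto)
  then show ?thesis using h by simp
qed

lemma upb: "a \<le> b \<Longrightarrow> 0 \<le> a \<Longrightarrow> integral {a..b} f \<le> (b - a) * f b"
proof -
  assume h: "a \<le> b" "0 \<le> a"
  have "integral {a..b} f \<le> integral {a..b} (\<lambda>x. f b)"
    by (rule integral_le) (use h fint fle in auto)
  then show ?thesis using h by simp
qed

definition G where "G x = integral {0..x} f"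

lemma Gmono: "0 \<le> a \<Longrightarrow> a \<le> b \<Longrightarrow> G a \<le> G b"
  using comb[of a b] lowb[of a b] fnn[of a] unfolding G_def
  by (smt (verit) mult_nonneg_nonneg)

lemma G0: "G 0 = 0" by (simp add: G_def)

lemma Gnn: "0 \<le> a \<Longrightarrow> 0 \<le> G a" using Gmono[of 0 a] G0 by simp

lemma Gcoer: "0 \<le> x \<Longrightarrow> (x - 1) * f 1 \<le> G x"
proof (cases "x \<le> 1")
  case True
  assume "0 \<le> x"
  then show ?thesis using True Gnn[of x] fnn[of 1]
    by (smt (verit) mult_nonpos_nonneg)
next
  case False
  then show ?thesis using comb[of 1 x] lowb[of 1 x] Gnn[of 1] unfolding G_def by auto
qed

lemma f1: "0 < f 1" using flt[of 0 1] f0 by simp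

lemma Gmid_strict:
  assumes "0 \<le> a" "a < b"
  shows "2 * G ((a + b)/2) < G a + G b"
proof -
  define m where "m = (a+b)/2"
  define c where "c = (m+b)/2"
  have o: "a \<le> m" "m \<le> c" "c \<le> b" "m < c" "c < b" using assms by (auto simp: m_def c_def)
  have "G b - G m = integral {m..c} f + integral {c..b} f"
    using comb[of m b] Henstock_Kurzweil_Integration.integral_combine[where a=m and c=c and b=b and f=f] fint[of m b] o assms unfolding G_def by auto
  moreover have "integral {m..c} f \<ge> (c - m) * f m" using lowb[of m c] o assms by auto
  moreover have "integral {c..b} f \<ge> (b - c) * f c" using lowb[of c b] o assms by auto
  moreover have "(b - c) * f m < (b - c) * f c" using flt[of m c] o assms by auto
  moreover have "G m - G a \<le> (m - a) * f m" using comb[of a m] upb[of a m] o assms unfolding G_def by auto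
  moreover have "b - m = m - a" unfolding m_def by (simp add: field_simps)
  ultimately have "G b - G m > G m - G a"
    by (smt (verit) distrib_left left_diff_distrib)
  then show ?thesis by (simp add: m_def)
qed

lemma Gmid:
  assumes "0 \<le> a" "0 \<le> b"
  shows "2 * G ((a + b)/2) \<le> G a + G b" "a \<noteq> b \<Longrightarrow> 2 * G ((a + b)/2) < G a + G b"
proof -
  show "a \<noteq> b \<Longrightarrow> 2 * G ((a + b)/2) < G a + G b"
    using Gmid_strict[of a b] Gmid_strict[of b a] assms
    by (cases "a < b") (auto simp: add.commute)
  then show "2 * G ((a + b)/2) \<le> G a + G b"
    by (cases "a = b") auto
qed

lemma Gcont: "continuous_on {0..M} G"
proof -
  have "\<And>x. x \<in> {0..M} \<Longrightarrow> continuous (at x within {0..M}) G"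
    unfolding G_def
    using integral_has_vector_derivative[OF continuous_on_subset[OF fc]]
    by (meson atLeastAtMost_iff atLeast_iff has_vector_derivative_continuous subsetI)
  then show ?thesis using continuous_on_eq_continuous_within by blast
qed

lemma Lyap_G: "Lyap f r = (\<Sum>n\<in>UNIV. G (r $ n))"
  by (simp add: Lyap_def G_def)

lemma Lyap_ge: "nonneg_vec r \<Longrightarrow> G (r $ n) \<le> Lyap f r"
  unfolding Lyap_G by (rule member_le_sum) (auto simp: nonneg_vec_def Gnn)

lemma Lyap_nn: "nonneg_vec r \<Longrightarrow> 0 \<le> Lyap f r"
  unfolding Lyap_G by (rule sum_nonneg) (auto simp: nonneg_vec_def Gnn)

lemma Lyap_mono: "nonneg_vec r \<Longrightarrow> vle r s \<Longrightarrow> Lyap f r \<le> Lyap f s"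
  unfolding Lyap_G by (rule sum_mono) (auto simp: nonneg_vec_def vle_def intro: Gmono)

lemma exists_unique_min:
  fixes C :: "(real^'n) set"
  assumes cl: "closed C" and cv: "convex C" and qC: "q \<in> C" and nn: "\<And>r. r \<in> C \<Longrightarrow> nonneg_vec r"
  shows "\<exists>!r. r \<in> C \<and> (\<forall>r'\<in>C. Lyap f r \<le> Lyap f r')"
proof -
  define M where "M = 1 + Lyap f q / f 1 + (\<Sum>n\<in>UNIV. q $ n)"
  define K where "K = C \<inter> cbox 0 (\<chi> _. M)"
  have qn: "nonneg_vec q" using nn qC .
  have Lq: "0 \<le> Lyap f q" using Lyap_nn[OF qn] .
  have qle: "q $ n \<le> M" for n
  proof -
    have "q $ n \<le> (\<Sum>n\<in>UNIV. q $ n)" by (rule member_le_sum) (use qn in \<open>auto simp: nonneg_vec_def\<close>)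
    moreover have "0 \<le> Lyap f q / f 1" using Lq f1 by simp
    ultimately show ?thesis by (simp add: M_def)
  qed
  have qK: "q \<in> K" using qC qn qle by (auto simp: K_def mem_box_cart nonneg_vec_def)
  have cK: "compact K" unfolding K_def by (rule closed_Int_compact[OF cl compact_cbox])
    have contK: "continuous_on K (Lyap f)"
  proof -
    have "continuous_on K (\<lambda>r. \<Sum>n\<in>UNIV. G (r $ n))"
    proof (rule continuous_on_sum)
      fix n :: 'n
      show "continuous_on K (\<lambda>r. G (r $ n))"
        by (rule continuous_on_compose2[OF Gcont[of M]])
           (auto simp: K_def mem_box_cart intro!: continuous_intros)
    qed
    then show ?thesis by (simp add: Lyap_G[abs_def])
  qed
  obtain r0 where r0: "r0 \<in> K" "\<forall>y\<in>K. Lyap f r0 \<le> Lyap f y"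
    using continuous_attains_inf[OF cK _ contK] qK by blast
  have opt: "\<forall>r'\<in>C. Lyap f r0 \<le> Lyap f r'"
  proof
    fix r assume rC: "r \<in> C"
    show "Lyap f r0 \<le> Lyap f r"
    proof (cases "r \<in> K")
      case True then show ?thesis using r0 by blast
    next
      case False
      have rn: "nonneg_vec r" using nn rC .
      then obtain n where n: "r $ n > M" using False rC by (force simp: K_def mem_box_cart nonneg_vec_def not_le)
      have "(M - 1) * f 1 < (r $ n - 1) * f 1" using n f1 by simp
      also have "\<dots> \<le> G (r $ n)" using Gcoer[of "r $ n"] rn by (simp add: nonneg_vec_def)
      also have "\<dots> \<le> Lyap f r" using Lyap_ge[OF rn] .
      finally have "(M - 1) * f 1 < Lyap f r" .
      moreover have "(M - 1) * f 1 \<ge> Lyap f q"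
      proof -
        have "(\<Sum>n\<in>UNIV. q $ n) \<ge> 0" using qn by (auto simp: nonneg_vec_def intro: sum_nonneg)
        then have "M - 1 \<ge> Lyap f q / f 1" by (simp add: M_def)
        then show ?thesis using f1 by (simp add: pos_divide_le_eq)
      qed
      moreover have "Lyap f r0 \<le> Lyap f q" using r0 qK by blast
      ultimately show ?thesis by linarith
    qed
  qed
  have r0C: "r0 \<in> C" using r0 by (simp add: K_def)
  show ?thesis
  proof (rule ex1I[of _ r0])
    show "r0 \<in> C \<and> (\<forall>r'\<in>C. Lyap f r0 \<le> Lyap f r')" using r0C opt by blast
  next
    fix s assume s: "s \<in> C \<and> (\<forall>r'\<in>C. Lyap f s \<le> Lyap f r')"
    show "s = r0"
    proof (rule ccontr)
      assume ne: "s \<noteq> r0"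
      define m where "m = (1/2) *\<^sub>R s + (1/2) *\<^sub>R r0"
      have mC: "m \<in> C" unfolding m_def using convexD[OF cv, of s r0 "1/2" "1/2"] s r0C by auto
      have sn: "nonneg_vec s" "nonneg_vec r0" using nn s r0C by auto
      obtain i where i: "s $ i \<noteq> r0 $ i" using ne by (auto simp: vec_eq_iff)
      have "(\<Sum>n\<in>UNIV. 2 * G (m $ n)) < (\<Sum>n\<in>UNIV. G (s $ n) + G (r0 $ n))"
      proof (rule sum_strict_mono_ex1)
        show "\<forall>x\<in>UNIV. 2 * G (m $ x) \<le> G (s $ x) + G (r0 $ x)"
          using Gmid(1) sn by (auto simp: m_def nonneg_vec_def add_divide_distrib)
        show "\<exists>a\<in>UNIV. 2 * G (m $ a) < G (s $ a) + G (r0 $ a)"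
          using Gmid(2)[of "s $ i" "r0 $ i"] sn i by (auto simp: m_def nonneg_vec_def add_divide_distrib)
      qed simp
      then have "2 * Lyap f m < Lyap f s + Lyap f r0"
        by (simp add: Lyap_G sum.distrib sum_distrib_left)
      moreover have "Lyap f s \<le> Lyap f m" "Lyap f r0 \<le> Lyap f s" using s mC opt by auto
      moreover have "Lyap f r0 \<le> Lyap f m" using opt mC by auto
      ultimately show False using s r0C opt by (smt (verit))
    qed
  qed
qed

end


lemma dot: "(x::real^'n) \<bullet> y = (\<Sum>i\<in>UNIV. x $ i * y $ i)"
  by (simp add: inner_vec_def)

lemma dot_mono_nn: "nonneg_vec (x::real^'n) \<Longrightarrow> vle y z \<Longrightarrow> x \<bullet> y \<le> x \<bullet> z"
  unfolding dot by (rule sum_mono) (auto simp: nonneg_vec_def vle_def intro: mult_left_mono)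

lemma dot_mono_nn2: "nonneg_vec (x::real^'n) \<Longrightarrow> vle y z \<Longrightarrow> y \<bullet> x \<le> z \<bullet> x"
  using dot_mono_nn[of x y z] by (simp add: inner_commute)

lemma dot_nn: "nonneg_vec (x::real^'n) \<Longrightarrow> nonneg_vec y \<Longrightarrow> 0 \<le> x \<bullet> y"
  unfolding dot by (rule sum_nonneg) (auto simp: nonneg_vec_def)

lemma comp_le_dot: "nonneg_vec (x::real^'n) \<Longrightarrow> nonneg_vec y \<Longrightarrow> x $ n * y $ n \<le> x \<bullet> y"
  unfolding dot by (rule member_le_sum) (auto simp: nonneg_vec_def)

lemma lam_nn: "lam \<in> Lam S \<Longrightarrow> nonneg_vec lam" by (simp add: Lam_def)

lemma dual_le1:
  assumes "\<xi> \<in> dualpoly S" "lam \<in> Lam S"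
  shows "\<xi> \<bullet> lam \<le> 1"
proof -
  obtain \<sigma> where s: "\<sigma> \<in> convex hull S" "vle lam \<sigma>" using assms(2) by (auto simp: Lam_def)
  have "convex hull S \<subseteq> {x. \<xi> \<bullet> x \<le> 1}"
    by (rule hull_minimal) (use assms(1) in \<open>auto simp: dualpoly_def convex_halfspace_le\<close>)
  then have "\<xi> \<bullet> \<sigma> \<le> 1" using s by auto
  moreover have "\<xi> \<bullet> lam \<le> \<xi> \<bullet> \<sigma>" using dot_mono_nn[OF _ s(2)] assms(1) by (auto simp: dualpoly_def)
  ultimately show ?thesis by simp
qed

definition Zs :: "(real^'n) set \<Rightarrow> 'n set" where "Zs S = {n. \<forall>\<pi>\<in>S. \<pi> $ n = 0}"

definition P0 :: "(real^'n) set \<Rightarrow> (real^'n) set" where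
  "P0 S = {\<xi>. nonneg_vec \<xi> \<and> (\<forall>\<pi>\<in>S. \<xi> \<bullet> \<pi> \<le> 1) \<and> (\<forall>n\<in>Zs S. \<xi> $ n = 0)}"

lemma P0_sub_dual: "P0 S \<subseteq> dualpoly S" by (auto simp: P0_def dualpoly_def)

lemma Eset_dual: "\<xi> \<in> Eset S \<Longrightarrow> \<xi> \<in> dualpoly S"
  by (simp add: Eset_def extreme_point_of_def)

lemma ext_Z:
  assumes "\<xi> \<in> Eset S" "n \<in> Zs S"
  shows "\<xi> $ n = 0"
proof (rule ccontr)
  assume ne: "\<xi> $ n \<noteq> 0"
  have xd: "\<xi> \<in> dualpoly S" using assms(1) by (rule Eset_dual)
  define a where "a = (\<chi> i. if i = n then 0 else \<xi> $ i)"
  define b where "b = (\<chi> i. if i = n then 2 * \<xi> $ i else \<xi> $ i)"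
  have pos: "\<xi> $ n > 0" using ne xd by (auto simp: dualpoly_def nonneg_vec_def order_le_less)
  have ip: "c \<bullet> \<pi> = \<xi> \<bullet> \<pi>" if "\<pi> \<in> S" "c = a \<or> c = b" for \<pi> c
    unfolding dot using that assms(2) by (intro sum.cong) (auto simp: a_def b_def Zs_def split: if_splits)
  have "a \<in> dualpoly S" "b \<in> dualpoly S"
    using xd ip pos by (auto simp: dualpoly_def nonneg_vec_def a_def b_def)
  moreover have "a \<noteq> b" using pos by (auto simp: a_def b_def vec_eq_iff)
  moreover have "midpoint a b = \<xi>" by (auto simp: midpoint_def a_def b_def vec_eq_iff)
  ultimately show False using assms(1) midpoint_in_open_segment[of a b]
    unfolding Eset_def extreme_point_of_def by force
qed

lemma Eset_P0: "\<xi> \<in> Eset S \<Longrightarrow> \<xi> extreme_point_of P0 S"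
proof -
  assume e: "\<xi> \<in> Eset S"
  have "\<xi> \<in> P0 S" using Eset_dual[OF e] ext_Z[OF e] by (auto simp: P0_def dualpoly_def)
  then show ?thesis using e P0_sub_dual unfolding Eset_def extreme_point_of_def by blast
qed

lemma P0_Eset:
  assumes "\<xi> extreme_point_of P0 S"
  shows "\<xi> \<in> Eset S"
proof -
  have xP: "\<xi> \<in> P0 S" using assms by (simp add: extreme_point_of_def)
  have "\<xi> \<notin> open_segment a b" if "a \<in> dualpoly S" "b \<in> dualpoly S" for a b
  proof
    assume seg: "\<xi> \<in> open_segment a b"
    then obtain u where u: "0 < u" "u < 1" "\<xi> = (1 - u) *\<^sub>R a + u *\<^sub>R b" by (auto simp: in_segment)
    have "a $ n = 0 \<and> b $ n = 0" if "n \<in> Zs S" for n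
    proof -
      have "\<xi> $ n = 0" using xP that by (auto simp: P0_def)
      then have "(1 - u) * a $ n + u * b $ n = 0" using u by simp
      moreover have "a $ n \<ge> 0" "b $ n \<ge> 0" using \<open>a \<in> dualpoly S\<close> \<open>b \<in> dualpoly S\<close>
        by (auto simp: dualpoly_def nonneg_vec_def)
      ultimately show ?thesis using u
        by (smt (verit) mult_pos_pos mult_nonneg_nonneg mult_le_0_iff)
    qed
    then have "a \<in> P0 S" "b \<in> P0 S" using that by (auto simp: P0_def dualpoly_def)
    then show False using assms seg by (auto simp: extreme_point_of_def)
  qed
  moreover have "\<xi> \<in> dualpoly S" using xP P0_sub_dual by auto
  ultimately show ?thesis by (auto simp: Eset_def extreme_point_of_def)
qed

lemma P0_eq: "P0 S = (\<Inter>i\<in>UNIV. {x. (- axis i 1) \<bullet> x \<le> 0}) \<inter> (\<Inter>\<pi>\<in>S. {x. \<pi> \<bullet> x \<le> 1})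
   \<inter> (\<Inter>n\<in>Zs S. {x. axis n 1 \<bullet> x = 0})"
  by (auto simp: P0_def nonneg_vec_def inner_axis' inner_axis inner_commute)

lemma P0_poly: "finite S \<Longrightarrow> polyhedron (P0 S)"
  unfolding P0_eq
  by (intro polyhedron_Int polyhedron_Inter) (auto intro: polyhedron_halfspace_le polyhedron_halfspace_ge polyhedron_hyperplane)

lemma P0_box:
  assumes fin: "finite S" and nn: "\<forall>\<pi>\<in>S. nonneg_vec \<pi>"
  shows "P0 S \<subseteq> cbox 0 (\<chi> n. real (card S) / (\<Sum>\<pi>\<in>S. \<pi> $ n))"
proof
  fix \<xi> assume x: "\<xi> \<in> P0 S"
  have "0 \<le> \<xi> $ n \<and> \<xi> $ n \<le> real (card S) / (\<Sum>\<pi>\<in>S. \<pi> $ n)" for n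
  proof (cases "n \<in> Zs S")
    case True
    then have "\<xi> $ n = 0" using x by (auto simp: P0_def)
    moreover have "0 \<le> real (card S) / (\<Sum>\<pi>\<in>S. \<pi> $ n)"
      using nn by (auto simp: nonneg_vec_def intro!: divide_nonneg_nonneg sum_nonneg)
    ultimately show ?thesis by simp
  next
    case False
    then obtain \<pi> where p: "\<pi> \<in> S" "\<pi> $ n \<noteq> 0" by (auto simp: Zs_def)
    have "\<pi> $ n \<le> (\<Sum>\<pi>\<in>S. \<pi> $ n)" by (rule member_le_sum) (use p nn fin in \<open>auto simp: nonneg_vec_def\<close>)
    moreover have "\<pi> $ n > 0" using p nn by (auto simp: nonneg_vec_def order_le_less)
    ultimately have sp: "(\<Sum>\<pi>\<in>S. \<pi> $ n) > 0" by simp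
    have xn: "nonneg_vec \<xi>" using x by (auto simp: P0_def)
    have "\<xi> $ n * (\<Sum>\<pi>\<in>S. \<pi> $ n) = (\<Sum>\<pi>\<in>S. \<xi> $ n * \<pi> $ n)" by (simp add: sum_distrib_left)
    also have "\<dots> \<le> (\<Sum>\<pi>\<in>S. 1)"
    proof (rule sum_mono)
      fix \<pi> assume "\<pi> \<in> S"
      then have "\<xi> $ n * \<pi> $ n \<le> \<xi> \<bullet> \<pi>" "\<xi> \<bullet> \<pi> \<le> 1" using comp_le_dot[OF xn] x nn by (auto simp: P0_def)
      then show "\<xi> $ n * \<pi> $ n \<le> 1" by simp
    qed
    finally have "\<xi> $ n * (\<Sum>\<pi>\<in>S. \<pi> $ n) \<le> real (card S)" by simp
    then show ?thesis using sp xn by (simp add: pos_le_divide_eq nonneg_vec_def)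
  qed
  then show "\<xi> \<in> cbox 0 (\<chi> n. real (card S) / (\<Sum>\<pi>\<in>S. \<pi> $ n))" by (simp add: mem_box_cart)
qed

lemma P0_compact:
  assumes fin: "finite S" and nn: "\<forall>\<pi>\<in>S. nonneg_vec \<pi>"
  shows "compact (P0 S)"
proof -
  have "P0 S = P0 S \<inter> cbox 0 (\<chi> n. real (card S) / (\<Sum>\<pi>\<in>S. \<pi> $ n))" using P0_box[OF assms] by blast
  moreover have "compact (P0 S \<inter> cbox 0 (\<chi> n. real (card S) / (\<Sum>\<pi>\<in>S. \<pi> $ n)))"
    by (rule closed_Int_compact[OF polyhedron_imp_closed[OF P0_poly[OF fin]] compact_cbox])
  ultimately show ?thesis by simp
qed

lemma Eset_finite: "finite S \<Longrightarrow> finite (Eset S)"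
proof -
  assume fin: "finite S"
  have "Eset S \<subseteq> {x. x extreme_point_of P0 S}" using Eset_P0 by blast
  then show ?thesis using finite_subset finite_polyhedron_extreme_points[OF P0_poly[OF fin]] by blast
qed

lemma KM:
  assumes fin: "finite S" and nn: "\<forall>\<pi>\<in>S. nonneg_vec \<pi>" and lam: "lam \<in> Lam S"
    and eta: "\<eta> \<in> P0 S" "\<eta> \<bullet> lam = 1" and r: "plus_feasible S lam q r"
  shows "\<eta> \<bullet> q \<le> \<eta> \<bullet> r"
proof -
  have "\<eta> \<in> convex hull {x. x extreme_point_of P0 S}"
    using Krein_Milman_Minkowski[OF P0_compact[OF fin nn] polyhedron_imp_convex[OF P0_poly[OF fin]]] eta
    by blast
  then obtain T u where T: "finite T" "T \<subseteq> {x. x extreme_point_of P0 S}" "\<forall>x\<in>T. 0 \<le> u x"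
     "sum u T = 1" "(\<Sum>v\<in>T. u v *\<^sub>R v) = \<eta>"
    unfolding convex_hull_explicit by blast
  have TE: "v \<in> Eset S" if "v \<in> T" for v using T(2) that P0_Eset by blast
  have ip: "\<eta> \<bullet> x = (\<Sum>v\<in>T. u v * (v \<bullet> x))" for x
    using T(5)[symmetric] by (simp add: inner_sum_left)
  have "(\<Sum>v\<in>T. u v * (1 - v \<bullet> lam)) = 0"
    using ip[of lam] eta(2) T(4) by (simp add: right_diff_distrib sum_subtractf)
  moreover have nn0: "\<forall>v\<in>T. 0 \<le> u v * (1 - v \<bullet> lam)"
  proof
    fix v assume "v \<in> T"
    then have "0 \<le> u v" "v \<bullet> lam \<le> 1" using T(3) TE dual_le1[OF Eset_dual lam] by auto
    then show "0 \<le> u v * (1 - v \<bullet> lam)" by simp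
  qed
  ultimately have z: "\<forall>v\<in>T. u v * (1 - v \<bullet> lam) = 0" using sum_nonneg_eq_0_iff[OF T(1), of "\<lambda>v. u v * (1 - v \<bullet> lam)"] nn0 by auto
  have "u v * (v \<bullet> q) \<le> u v * (v \<bullet> r)" if "v \<in> T" for v
  proof (cases "u v = 0")
    case False
    then have "v \<bullet> lam = 1" using z that by auto
    then have "v \<in> Xi_plus S lam" using TE[OF that] by (simp add: Xi_plus_def)
    then have "v \<bullet> q \<le> v \<bullet> r" using r by (auto simp: plus_feasible_def)
    then show ?thesis using T(3) that by (simp add: mult_left_mono)
  qed simp
  then show ?thesis unfolding ip by (rule sum_mono)
qed

lemma domin:
  assumes fin: "finite S" and lam: "lam \<in> Lam S" and x: "\<xi> \<in> Eset S" "\<xi> \<bullet> lam = 1"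
  shows "\<exists>\<eta>\<in>Xi S lam. vle \<xi> \<eta>"
proof -
  define D where "D = {\<eta>\<in>Eset S. vle \<xi> \<eta>}"
  define h where "h = (\<lambda>\<eta>::real^'a. \<Sum>i\<in>UNIV. \<eta> $ i)"
  have fD: "finite D" using Eset_finite[OF fin] by (simp add: D_def)
  have xD: "\<xi> \<in> D" by (simp add: D_def x vle_def)
  have "Max (h ` D) \<in> h ` D" using fD xD by (intro Max_in) auto
  then obtain \<eta> where e: "\<eta> \<in> D" "h \<eta> = Max (h ` D)" by auto
  have emax: "h \<eta>' \<le> h \<eta>" if "\<eta>' \<in> D" for \<eta>' using e fD that by simp
  have eS: "\<eta> \<in> Sstar S"
  proof -
    have "\<not> (vle \<eta> \<eta>' \<and> \<eta>' \<noteq> \<eta>)" if "\<eta>' \<in> Eset S" for \<eta>'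
    proof
      assume a: "vle \<eta> \<eta>' \<and> \<eta>' \<noteq> \<eta>"
      then have "\<eta>' \<in> D" using e that by (auto simp: D_def vle_def intro: order_trans)
      moreover have "h \<eta> < h \<eta>'"
        unfolding h_def
      proof (rule sum_strict_mono_ex1)
        obtain i where "\<eta>' $ i \<noteq> \<eta> $ i" using a by (auto simp: vec_eq_iff)
        then have "\<eta> $ i < \<eta>' $ i" using a by (auto simp: vle_def order_le_less)
        then show "\<exists>a\<in>UNIV. \<eta> $ a < \<eta>' $ a" by blast
      qed (use a in \<open>auto simp: vle_def\<close>)
      ultimately show False using emax by force
    qed
    then show ?thesis using e by (auto simp: Sstar_def D_def)
  qed
  have "\<xi> \<bullet> lam \<le> \<eta> \<bullet> lam" using dot_mono_nn2[OF lam_nn[OF lam]] e by (auto simp: D_def)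
  moreover have "\<eta> \<bullet> lam \<le> 1" using dual_le1[OF Eset_dual lam] e by (auto simp: D_def)
  ultimately have "\<eta> \<in> Xi S lam" using eS x by (simp add: Xi_def)
  then show ?thesis using e by (auto simp: D_def)
qed

lemma lift_plus:
  assumes fin: "finite S" and lam: "lam \<in> Lam S" and r: "lift_feasible S lam q r"
  shows "plus_feasible S lam q r"
  unfolding plus_feasible_def
proof (intro conjI ballI)
  show "nonneg_vec r" using r by (simp add: lift_feasible_def)
  fix \<xi> assume x: "\<xi> \<in> Xi_plus S lam"
  then have xE: "\<xi> \<in> Eset S" "\<xi> \<bullet> lam = 1" by (auto simp: Xi_plus_def)
  obtain \<eta> where e: "\<eta> \<in> Xi S lam" "vle \<xi> \<eta>" using domin[OF fin lam xE] by blast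
  have eE: "\<eta> \<in> Eset S" "\<eta> \<bullet> lam = 1" using e by (auto simp: Xi_def Sstar_def)
  have ln: "nonneg_vec lam" using lam_nn[OF lam] .
  have "(\<Sum>i\<in>UNIV. (\<eta> $ i - \<xi> $ i) * lam $ i) = 0"
    using eE(2) xE(2) by (simp add: dot left_diff_distrib sum_subtractf)
  moreover have nn0: "\<forall>i\<in>UNIV. 0 \<le> (\<eta> $ i - \<xi> $ i) * lam $ i"
    using e(2) ln by (auto simp: vle_def nonneg_vec_def)
  ultimately have z: "\<forall>i. (\<eta> $ i - \<xi> $ i) * lam $ i = 0"
    using sum_nonneg_eq_0_iff[of UNIV "\<lambda>i. (\<eta> $ i - \<xi> $ i) * lam $ i"] nn0 by auto
  have "\<eta> $ i * r $ i - \<eta> $ i * q $ i \<le> \<xi> $ i * r $ i - \<xi> $ i * q $ i" for i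
  proof (cases "\<eta> $ i = \<xi> $ i")
    case False
    then have "lam $ i = 0" using z[rule_format, of i] by simp
    then have "r $ i \<le> q $ i" using r by (simp add: lift_feasible_def)
    moreover have "\<xi> $ i \<le> \<eta> $ i" using e(2) by (simp add: vle_def)
    ultimately have "(\<eta> $ i - \<xi> $ i) * (r $ i - q $ i) \<le> 0" by (simp add: mult_nonneg_nonpos)
    then show ?thesis by (simp add: algebra_simps)
  qed simp
  then have "\<eta> \<bullet> r - \<eta> \<bullet> q \<le> \<xi> \<bullet> r - \<xi> \<bullet> q"
    unfolding dot sum_subtractf[symmetric] by (rule sum_mono)
  moreover have "\<eta> \<bullet> q \<le> \<eta> \<bullet> r" using e(1) r by (auto simp: lift_feasible_def)
  ultimately show "\<xi> \<bullet> q \<le> \<xi> \<bullet> r" by simp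
qed

definition clip :: "real^'n \<Rightarrow> real^'n \<Rightarrow> real^'n \<Rightarrow> real^'n" where
  "clip lam q r = (\<chi> n. if lam $ n = 0 then min (r $ n) (q $ n) else r $ n)"

lemma clip_feas:
  assumes fin: "finite S" and nn: "\<forall>\<pi>\<in>S. nonneg_vec \<pi>" and lam: "lam \<in> Lam S"
    and q: "nonneg_vec q" and r: "plus_feasible S lam q r"
  shows "lift_feasible S lam q (clip lam q r)" "vle (clip lam q r) r"
proof -
  have rn: "nonneg_vec r" using r by (simp add: plus_feasible_def)
  show "vle (clip lam q r) r" by (simp add: vle_def clip_def)
  have "\<xi> \<bullet> q \<le> \<xi> \<bullet> clip lam q r" if x: "\<xi> \<in> Xi S lam" for \<xi>
  proof -
    have xE: "\<xi> \<in> Eset S" "\<xi> \<bullet> lam = 1" using x by (auto simp: Xi_def Sstar_def)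
    define \<eta> where "\<eta> = (\<chi> n. if lam $ n = 0 \<and> q $ n < r $ n then 0 else \<xi> $ n)"
    have xd: "\<xi> \<in> dualpoly S" using Eset_dual[OF xE(1)] .
    have xn: "nonneg_vec \<xi>" using xd by (simp add: dualpoly_def)
    have en: "nonneg_vec \<eta>" using xn by (auto simp: \<eta>_def nonneg_vec_def)
    have ex: "vle \<eta> \<xi>" using xn by (auto simp: \<eta>_def vle_def nonneg_vec_def)
    have "\<eta> \<in> P0 S"
      unfolding P0_def
    proof (intro CollectI conjI ballI)
      show "nonneg_vec \<eta>" by (rule en)
      fix \<pi> assume "\<pi> \<in> S"
      then show "\<eta> \<bullet> \<pi> \<le> 1" using dot_mono_nn2[OF _ ex, of \<pi>] nn xd by (force simp: dualpoly_def)
    next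
      fix n assume "n \<in> Zs S" then show "\<eta> $ n = 0" using ext_Z[OF xE(1)] by (simp add: \<eta>_def)
    qed
    moreover have "\<eta> \<bullet> lam = \<xi> \<bullet> lam"
      unfolding dot by (rule sum.cong) (auto simp: \<eta>_def)
    then have "\<eta> \<bullet> lam = 1" using xE(2) by simp
    ultimately have "\<eta> \<bullet> q \<le> \<eta> \<bullet> r" using KM[OF fin nn lam _ _ r] by blast
    moreover have "\<xi> \<bullet> clip lam q r - \<xi> \<bullet> q = \<eta> \<bullet> r - \<eta> \<bullet> q"
      unfolding dot sum_subtractf[symmetric]
      by (rule sum.cong) (auto simp: \<eta>_def clip_def)
    ultimately show ?thesis by simp
  qed
  then show "lift_feasible S lam q (clip lam q r)"
    using rn q by (auto simp: lift_feasible_def clip_def nonneg_vec_def)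
qed

lemma plus_closed: "closed {r. plus_feasible S lam q r}" and plus_convex: "convex {r. plus_feasible S lam q r}"
proof -
  have e: "{r. plus_feasible S lam q r} = (\<Inter>i. {r. axis i 1 \<bullet> r \<ge> 0}) \<inter> (\<Inter>\<xi>\<in>Xi_plus S lam. {r. \<xi> \<bullet> r \<ge> \<xi> \<bullet> q})"
    by (auto simp: plus_feasible_def nonneg_vec_def inner_axis')
  show "closed {r. plus_feasible S lam q r}" unfolding e
    by (intro closed_Int closed_INT ballI closed_halfspace_ge)
  show "convex {r. plus_feasible S lam q r}" unfolding e
    by (intro convex_Int convex_INT ballI convex_halfspace_ge)
qed


theorem lemma5p6:
  fixes S :: "(real^'n) set" and f :: "real \<Rightarrow> real" and lam q :: "real^'n"
  assumes S_fin: "finite S"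
    and S_nonneg: "\<forall>\<pi>\<in>S. nonneg_vec \<pi>"
    and f_diff: "\<forall>x\<ge>0. f differentiable (at x within {0..})"
    and f_mono: "strict_mono_on {0..} f"
    and f0: "f 0 = 0"
    and lam: "lam \<in> Lam S"
    and q: "nonneg_vec q"
  shows "(\<exists>!r. plus_optimal f S lam q r) \<and> plus_optimal f S lam q (Delta f S lam q)"
proof -
  have fc: "continuous_on {0..} f"
    using f_diff differentiable_imp_continuous_within continuous_on_eq_continuous_within
    by (metis atLeast_iff)
  interpret fG f using fc f_mono f0 by unfold_locales
  have qC: "q \<in> {r. plus_feasible S lam q r}" using q by (simp add: plus_feasible_def)
  have ex: "\<exists>!r. r \<in> {r. plus_feasible S lam q r} \<and> (\<forall>r'\<in>{r. plus_feasible S lam q r}. Lyap f r \<le> Lyap f r')"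
    by (rule exists_unique_min[OF plus_closed plus_convex qC]) (simp add: plus_feasible_def)
  then have ex1: "\<exists>!r. plus_optimal f S lam q r" by (simp add: plus_optimal_def)
  then obtain rA where rA: "plus_optimal f S lam q rA" and uq: "\<And>r. plus_optimal f S lam q r \<Longrightarrow> r = rA"
    by blast
  have rAf: "plus_feasible S lam q rA" using rA by (simp add: plus_optimal_def)
  note cl = clip_feas[OF S_fin S_nonneg lam q rAf]
  have cpf: "plus_feasible S lam q (clip lam q rA)" using lift_plus[OF S_fin lam cl(1)] .
  have "Lyap f (clip lam q rA) \<le> Lyap f rA"
    using Lyap_mono[OF _ cl(2)] cpf by (simp add: plus_feasible_def)
  then have "plus_optimal f S lam q (clip lam q rA)"
    using cpf rA by (force simp: plus_optimal_def)
  then have "clip lam q rA = rA" by (rule uq)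
  then have rAl: "lift_feasible S lam q rA" using cl(1) by simp
  have "Delta f S lam q = rA"
    unfolding Delta_def
  proof (rule the_equality)
    show "lift_feasible S lam q rA \<and> (\<forall>r'. lift_feasible S lam q r' \<longrightarrow> Lyap f rA \<le> Lyap f r')"
      using rAl rA lift_plus[OF S_fin lam] by (auto simp: plus_optimal_def)
  next
    fix r assume r: "lift_feasible S lam q r \<and> (\<forall>r'. lift_feasible S lam q r' \<longrightarrow> Lyap f r \<le> Lyap f r')"
    then have "Lyap f r \<le> Lyap f rA" using rAl by blast
    moreover have "plus_feasible S lam q r" using r lift_plus[OF S_fin lam] by blast
    ultimately have "plus_optimal f S lam q r" using rA by (force simp: plus_optimal_def)
    then show "r = rA" by (rule uq)
  qed
  then show ?thesis using ex1 rA by simp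
qed

end
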